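(* In the setting described in the context, let $\bar\eta>0$ satisfy $g(\mathbf Q)-g(\mathbf X)\ge\bar\eta\,d_F^2(\mathbf X,\mathbf Q)$ for all $\mathbf X\in\mathrm{St}(d,K)$. If $\hat{\mathbf X}$ is a global optimal solution of $\max_{\mathbf X\in\mathrm{St}(d,K)}f(\mathbf X)$, where $f(\mathbf X)=g(\mathbf X)+\sum_{k=1}^K\mathbf x_k^\top\Delta_k\mathbf x_k$, then $$d_F(\hat{\mathbf X},\mathbf Q)\le\frac{2\sqrt K}{\bar\eta}\max_{k\in[K]}\|\Delta_k\|.$$
   Context: $d>K\ge1$, $\mathrm{St}(d,K)=\{\mathbf X\in\mathbb R^{d\times K}:\mathbf X^\top\mathbf X=\mathbf I_K\}$, $\mathbf Q\in\mathrm{St}(d,K)$, $\lambda_1>\dots>\lambda_K>0$, $\boldsymbol\Theta=\mathrm{diag}(\sqrt{\lambda_1},\dots,\sqrt{\lambda_K})$. Integers $L\ge1$, $n_1,\dots,n_L\ge1$, $n=\sum_ln_l$; $v_1>\dots>v_L>0$; data $\mathbf y_{l,i}=\mathbf Q\boldsymbol\Theta\mathbf z_{l,i}+\boldsymbol\eta_{l,i}\in\mathbb R^d$ with $\mathbf z_{l,i}$ i.i.d. $\mathcal N(\mathbf0,\mathbf I_K)$ independent of $\boldsymbol\eta_{l,i}$ i.i.d. $\mathcal N(\mathbf0,v_l\mathbf I_d)$. $w_{l,k}=\lambda_k/(\lambda_k+v_l)$, $a_k=\sum_lw_{l,k}\frac{n_l}{n}\frac1{v_l}$, $\gamma_k=\sum_lw_{l,k}\frac{n_l}{n}$,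 $\mathbf M_k=\frac1n\sum_l\sum_i\frac{w_{l,k}}{v_l}\mathbf y_{l,i}\mathbf y_{l,i}^\top-\gamma_k\mathbf I_d$, $\Delta_k=\mathbf M_k-a_k\mathbf Q\boldsymbol\Theta^2\mathbf Q^\top$ ($\|\cdot\|$ operator norm). $g(\mathbf X)=\mathrm{tr}(\mathbf X^\top\mathbf Q\boldsymbol\Theta^2\mathbf Q^\top\mathbf X\,\mathrm{diag}(a_1,\dots,a_K))$, $\mathbf x_k$ is the $k$-th column of $\mathbf X$, $d_F(\mathbf X,\mathbf Q)=\min_{\mathbf q\in\{\pm1\}^K}\|\mathbf X-\mathbf Q\,\mathrm{diag}(\mathbf q)\|_F$. *)

theory Defs
  imports "HOL-Analysis.Analysis"
begin

text \<open>Conventions: indices are 0-based. A d x K matrix X is represented by its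
  columns x :: nat => real^'d, k < K (d = CARD('d)). Data y l i for l < L, i < nn l.\<close>

definition outer :: "real^'d \<Rightarrow> real^'d \<Rightarrow> real^'d^'d" where
  "outer u v = (\<chi> i j. u $ i * v $ j)"

definition stiefel :: "nat \<Rightarrow> (nat \<Rightarrow> real^'d) \<Rightarrow> bool" where
  "stiefel K x \<longleftrightarrow> (\<forall>i<K. \<forall>j<K. x i \<bullet> x j = (if i = j then 1 else 0))"

text \<open>Q Theta^2 Q^T = sum_m lambda_m q_m q_m^T\<close>
definition QT2Q :: "nat \<Rightarrow> (nat \<Rightarrow> real) \<Rightarrow> (nat \<Rightarrow> real^'d) \<Rightarrow> real^'d^'d" where
  "QT2Q K lam q = (\<Sum>m<K. lam m *\<^sub>R outer (q m) (q m))"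

definition wgt :: "(nat \<Rightarrow> real) \<Rightarrow> (nat \<Rightarrow> real) \<Rightarrow> nat \<Rightarrow> nat \<Rightarrow> real" where
  "wgt lam v l k = lam k / (lam k + v l)"

definition ntot :: "nat \<Rightarrow> (nat \<Rightarrow> nat) \<Rightarrow> nat" where
  "ntot L nn = (\<Sum>l<L. nn l)"

definition acoef :: "nat \<Rightarrow> (nat \<Rightarrow> nat) \<Rightarrow> (nat \<Rightarrow> real) \<Rightarrow> (nat \<Rightarrow> real) \<Rightarrow> nat \<Rightarrow> real" where
  "acoef L nn lam v k = (\<Sum>l<L. wgt lam v l k * (real (nn l) / real (ntot L nn)) * (1 / v l))"

definition gcoef :: "nat \<Rightarrow> (nat \<Rightarrow> nat) \<Rightarrow> (nat \<Rightarrow> real) \<Rightarrow> (nat \<Rightarrow> real) \<Rightarrow> nat \<Rightarrow> real" where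
  "gcoef L nn lam v k = (\<Sum>l<L. wgt lam v l k * (real (nn l) / real (ntot L nn)))"

definition Mmat :: "nat \<Rightarrow> (nat \<Rightarrow> nat) \<Rightarrow> (nat \<Rightarrow> real) \<Rightarrow> (nat \<Rightarrow> real)
    \<Rightarrow> (nat \<Rightarrow> nat \<Rightarrow> real^'d) \<Rightarrow> nat \<Rightarrow> real^'d^'d" where
  "Mmat L nn lam v y k =
     (1 / real (ntot L nn)) *\<^sub>R (\<Sum>l<L. \<Sum>i<nn l. (wgt lam v l k / v l) *\<^sub>R outer (y l i) (y l i))
     - gcoef L nn lam v k *\<^sub>R mat 1"

definition Delta :: "nat \<Rightarrow> nat \<Rightarrow> (nat \<Rightarrow> nat) \<Rightarrow> (nat \<Rightarrow> real) \<Rightarrow> (nat \<Rightarrow> real)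
    \<Rightarrow> (nat \<Rightarrow> real^'d) \<Rightarrow> (nat \<Rightarrow> nat \<Rightarrow> real^'d) \<Rightarrow> nat \<Rightarrow> real^'d^'d" where
  "Delta K L nn lam v q y k = Mmat L nn lam v y k - acoef L nn lam v k *\<^sub>R QT2Q K lam q"

text \<open>g(X) = tr(X^T Q Theta^2 Q^T X diag(a)) = sum_k a_k x_k^T (Q Theta^2 Q^T) x_k\<close>
definition gfun :: "nat \<Rightarrow> nat \<Rightarrow> (nat \<Rightarrow> nat) \<Rightarrow> (nat \<Rightarrow> real) \<Rightarrow> (nat \<Rightarrow> real)
    \<Rightarrow> (nat \<Rightarrow> real^'d) \<Rightarrow> (nat \<Rightarrow> real^'d) \<Rightarrow> real" where
  "gfun K L nn lam v q x = (\<Sum>k<K. acoef L nn lam v k * (x k \<bullet> (QT2Q K lam q *v x k)))"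

definition ffun :: "nat \<Rightarrow> nat \<Rightarrow> (nat \<Rightarrow> nat) \<Rightarrow> (nat \<Rightarrow> real) \<Rightarrow> (nat \<Rightarrow> real)
    \<Rightarrow> (nat \<Rightarrow> real^'d) \<Rightarrow> (nat \<Rightarrow> nat \<Rightarrow> real^'d) \<Rightarrow> (nat \<Rightarrow> real^'d) \<Rightarrow> real" where
  "ffun K L nn lam v q y x = gfun K L nn lam v q x
      + (\<Sum>k<K. x k \<bullet> (Delta K L nn lam v q y k *v x k))"

definition dF :: "nat \<Rightarrow> (nat \<Rightarrow> real^'d) \<Rightarrow> (nat \<Rightarrow> real^'d) \<Rightarrow> real" where
  "dF K x q = Inf {sqrt (\<Sum>k<K. (norm (x k - s k *\<^sub>R q k))\<^sup>2) | s. \<forall>k<K. s k \<in> {-1, 1}}"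

definition opnorm :: "real^'d^'d \<Rightarrow> real" where
  "opnorm A = onorm (\<lambda>u. A *v u)"

end

theory Submission
  imports Defs
begin

lemma quad_diff_bound:
  fixes A :: "real^'d^'d" and x z :: "real^'d"
  assumes "norm x = 1" "norm z = 1"
  shows "x \<bullet> (A *v x) - z \<bullet> (A *v z) \<le> 2 * opnorm A * norm (x - z)"
proof -
  have bl: "bounded_linear (\<lambda>u. A *v u)" by simp
  have nb: "\<And>u. norm (A *v u) \<le> opnorm A * norm u"
    unfolding opnorm_def using onorm[OF bl] by blast
  have eq: "x \<bullet> (A *v x) - z \<bullet> (A *v z) = (x - z) \<bullet> (A *v x) + z \<bullet> (A *v (x - z))"
    by (simp add: matrix_vector_mult_diff_distrib inner_diff_left inner_diff_right)
  have "(x - z) \<bullet> (A *v x) \<le> norm (x - z) * norm (A *v x)"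
    by (rule norm_cauchy_schwarz)
  also have "\<dots> \<le> norm (x - z) * (opnorm A * norm x)"
    by (rule mult_left_mono[OF nb]) simp
  finally have 1: "(x - z) \<bullet> (A *v x) \<le> opnorm A * norm (x - z)" using assms by (simp add: mult.commute)
  have "z \<bullet> (A *v (x - z)) \<le> norm z * norm (A *v (x - z))"
    by (rule norm_cauchy_schwarz)
  also have "\<dots> \<le> norm z * (opnorm A * norm (x - z))"
    by (rule mult_left_mono[OF nb]) simp
  finally have 2: "z \<bullet> (A *v (x - z)) \<le> opnorm A * norm (x - z)" using assms by (simp add: mult.commute)
  show ?thesis using eq 1 2 by linarith
qed

lemma opnorm_nonneg: "0 \<le> opnorm (A :: real^'d^'d)"
  unfolding opnorm_def by (rule onorm_pos_le) simp

theorem lemma8: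
  fixes K L :: nat and nn :: "nat \<Rightarrow> nat" and lam v :: "nat \<Rightarrow> real"
    and q :: "nat \<Rightarrow> real^'d" and y :: "nat \<Rightarrow> nat \<Rightarrow> real^'d"
    and etabar :: real and xh :: "nat \<Rightarrow> real^'d"
  assumes dK: "K < CARD('d)" and K1: "1 \<le> K"
    and Q: "stiefel K q"
    and lam_dec: "\<forall>i j. i < j \<and> j < K \<longrightarrow> lam j < lam i" and lam_pos: "\<forall>k<K. 0 < lam k"
    and L1: "1 \<le> L" and nn1: "\<forall>l<L. 1 \<le> nn l"
    and v_dec: "\<forall>i j. i < j \<and> j < L \<longrightarrow> v j < v i" and v_pos: "\<forall>l<L. 0 < v l"
    and eta_pos: "0 < etabar"
    and growth: "\<forall>x. stiefel K x \<longrightarrow>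
        gfun K L nn lam v q q - gfun K L nn lam v q x \<ge> etabar * (dF K x q)\<^sup>2"
    and Xh: "stiefel K xh"
    and opt: "\<forall>x. stiefel K x \<longrightarrow> ffun K L nn lam v q y x \<le> ffun K L nn lam v q y xh"
  shows "dF K xh q \<le> 2 * sqrt (real K) / etabar
           * Max ((\<lambda>k. opnorm (Delta K L nn lam v q y k)) ` {..<K})"
proof -
  define D where "D k = Delta K L nn lam v q y k" for k
  define M where "M = Max ((\<lambda>k. opnorm (D k)) ` {..<K})"
  have MD: "opnorm (D k) \<le> M" if "k < K" for k
    unfolding M_def using that by (intro Max_ge) auto
  have M0: "0 \<le> M" using MD[of 0] K1 opnorm_nonneg[of "D 0"] by linarith
  have nx: "norm (xh k) = 1" if "k < K" for k
    using Xh that unfolding stiefel_def by (simp add: norm_eq_1)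
  have nq: "norm (q k) = 1" if "k < K" for k
    using Q that unfolding stiefel_def by (simp add: norm_eq_1)
  define S where "S = {sqrt (\<Sum>k<K. (norm (xh k - s k *\<^sub>R q k))\<^sup>2) | s. \<forall>k<K. s k \<in> {-1, 1::real}}"
  have dFS: "dF K xh q = Inf S" unfolding dF_def S_def by simp
  have "sqrt (\<Sum>k<K. (norm (xh k - (\<lambda>_. 1::real) k *\<^sub>R q k))\<^sup>2) \<in> S" unfolding S_def
    by (rule CollectI, rule exI[of _ "\<lambda>_. 1"]) simp
  then have Sne: "S \<noteq> {}" by blast
  have Sbdd: "bdd_below S" unfolding S_def bdd_below_def by (rule exI[of _ 0]) (auto simp: sum_nonneg)
  have gap: "gfun K L nn lam v q q - gfun K L nn lam v q xh
      \<le> (\<Sum>k<K. xh k \<bullet> (D k *v xh k) - q k \<bullet> (D k *v q k))"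
    using opt[rule_format, OF Q] unfolding ffun_def D_def sum_subtractf by simp
  have key: "etabar * (dF K xh q)\<^sup>2 \<le> 2 * M * sqrt (real K) * t" if "t \<in> S" for t
  proof -
    obtain s where s: "\<forall>k<K. s k \<in> {-1, 1::real}"
      and t: "t = sqrt (\<Sum>k<K. (norm (xh k - s k *\<^sub>R q k))\<^sup>2)"
      using \<open>t \<in> S\<close> unfolding S_def by blast
    have s2: "s k * s k = 1" if "k < K" for k using s that by auto
    have trm: "xh k \<bullet> (D k *v xh k) - q k \<bullet> (D k *v q k)
        \<le> 2 * M * norm (xh k - s k *\<^sub>R q k)" if k: "k < K" for k
    proof -
      have "q k \<bullet> (D k *v q k) = (s k *\<^sub>R q k) \<bullet> (D k *v (s k *\<^sub>R q k))"
        using s2[OF k] by (simp add: matrix_vector_mult_scaleR mult.assoc[symmetric])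
      moreover have "norm (s k *\<^sub>R q k) = 1" using s k nq[OF k] by auto
      ultimately have "xh k \<bullet> (D k *v xh k) - q k \<bullet> (D k *v q k)
          \<le> 2 * opnorm (D k) * norm (xh k - s k *\<^sub>R q k)"
        using quad_diff_bound[OF nx[OF k], of "s k *\<^sub>R q k" "D k"] by simp
      also have "\<dots> \<le> 2 * M * norm (xh k - s k *\<^sub>R q k)"
        using MD[OF k] by (intro mult_right_mono) auto
      finally show ?thesis .
    qed
    have "etabar * (dF K xh q)\<^sup>2 \<le> gfun K L nn lam v q q - gfun K L nn lam v q xh"
      using growth Xh by blast
    also have "\<dots> \<le> (\<Sum>k<K. 2 * M * norm (xh k - s k *\<^sub>R q k))"
      using gap sum_mono[of "{..<K}", OF trm] by fastforce
    also have "\<dots> = 2 * M * (\<Sum>k<K. \<bar>1\<bar> * \<bar>norm (xh k - s k *\<^sub>R q k)\<bar>)"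
      by (simp add: sum_distrib_left)
    also have "\<dots> \<le> 2 * M * (L2_set (\<lambda>_. 1) {..<K} * L2_set (\<lambda>k. norm (xh k - s k *\<^sub>R q k)) {..<K})"
      using M0 by (intro mult_left_mono L2_set_mult_ineq) auto
    also have "\<dots> = 2 * M * sqrt (real K) * t"
      unfolding t L2_set_def by simp
    finally show ?thesis .
  qed
  have d0: "0 \<le> dF K xh q" unfolding dFS
    by (rule cInf_greatest[OF Sne]) (auto simp: S_def sum_nonneg)
  have main: "etabar * (dF K xh q)\<^sup>2 \<le> 2 * M * sqrt (real K) * dF K xh q"
  proof (cases "M = 0")
    case True
    then show ?thesis using key Sne by fastforce
  next
    case False
    then have Mp: "0 < 2 * M * sqrt (real K)" using M0 K1 by simp
    have "etabar * (dF K xh q)\<^sup>2 / (2 * M * sqrt (real K)) \<le> Inf S"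
      by (rule cInf_greatest[OF Sne]) (use key Mp in \<open>simp add: pos_divide_le_eq mult.commute\<close>)
    then show ?thesis using Mp dFS by (simp add: pos_divide_le_eq mult.commute)
  qed
  show ?thesis
  proof (cases "dF K xh q = 0")
    case True
    then show ?thesis using M0 eta_pos unfolding M_def D_def by simp
  next
    case False
    then have dp: "0 < dF K xh q" using d0 by simp
    have "etabar * dF K xh q \<le> 2 * M * sqrt (real K)"
      using main dp by (simp add: power2_eq_square)
    then show ?thesis using eta_pos unfolding M_def D_def by (simp add: field_simps)
  qed
qed

end
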